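(* There is no algebra automorphism $\theta$ of $U^+$ with $\theta((z))=(z')$, and none with $\theta((z'))=(z)$.
   Context: $\Bbbk$ is an algebraically closed field of characteristic zero and $q\in\Bbbk^\times$ is not a root of unity. $U^+$ is the $\Bbbk$-algebra generated by $e_1,e_2$ with relations (S1) $e_1^2e_2-(q^2+q^{-2})e_1e_2e_1+e_2e_1^2=0$ and (S2) $e_2^3e_1-(q^2+1+q^{-2})e_2^2e_1e_2+(q^2+1+q^{-2})e_2e_1e_2^2-e_1e_2^3=0$. Set $e_3=e_1e_2-q^2e_2e_1$, $z=e_2e_3-q^2e_3e_2$, $w=e_2e_3-e_3e_2$, $z'=e_1w-q^{-4}we_1$; $(z)$, $(z')$ are the two-sided ideals they generate (both central elements). *)

theory Defs
  imports "HOL-Algebra.QuotRing" "HOL-Computational_Algebra.Polynomial"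
begin

text \<open>Noncommutative polynomials over 'k in two letters: finitely supported
  functions from words (lists over bool; False = e1, True = e2) to 'k.
  Multiplication is concatenation-convolution.\<close>

type_synonym 'k ncpoly = "bool list \<Rightarrow> 'k"

definition ncp_carrier :: "'k::zero ncpoly set" where
  "ncp_carrier = {f. finite {w. f w \<noteq> 0}}"

definition ncp_add :: "'k::plus ncpoly \<Rightarrow> 'k ncpoly \<Rightarrow> 'k ncpoly" where
  "ncp_add f g = (\<lambda>w. f w + g w)"

definition ncp_sub :: "'k::minus ncpoly \<Rightarrow> 'k ncpoly \<Rightarrow> 'k ncpoly" where
  "ncp_sub f g = (\<lambda>w. f w - g w)"

definition ncp_smult :: "'k::times \<Rightarrow> 'k ncpoly \<Rightarrow> 'k ncpoly" where
  "ncp_smult c f = (\<lambda>w. c * f w)"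

definition ncp_mult :: "'k::comm_semiring_1 ncpoly \<Rightarrow> 'k ncpoly \<Rightarrow> 'k ncpoly" where
  "ncp_mult f g = (\<lambda>w. \<Sum>i\<le>length w. f (take i w) * g (drop i w))"

definition ncp_mon :: "bool list \<Rightarrow> 'k::{zero,one} ncpoly" where
  "ncp_mon u = (\<lambda>w. if w = u then 1 else 0)"

definition ncp_const :: "'k::zero \<Rightarrow> 'k ncpoly" where
  "ncp_const c = (\<lambda>w. if w = [] then c else 0)"

definition free_alg :: "'k::field ncpoly ring" where
  "free_alg = \<lparr>carrier = ncp_carrier, monoid.mult = ncp_mult, one = ncp_mon [],
                ring.zero = (\<lambda>_. 0), ring.add = ncp_add\<rparr>"

definition gen1 :: "'k::field ncpoly" where "gen1 = ncp_mon [False]"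
definition gen2 :: "'k::field ncpoly" where "gen2 = ncp_mon [True]"

definition rel_S1 :: "'k::field \<Rightarrow> 'k ncpoly" where
  "rel_S1 q = ncp_add
     (ncp_sub (ncp_mult (ncp_mult gen1 gen1) gen2)
              (ncp_smult (q^2 + inverse q ^ 2) (ncp_mult (ncp_mult gen1 gen2) gen1)))
     (ncp_mult (ncp_mult gen2 gen1) gen1)"

definition rel_S2 :: "'k::field \<Rightarrow> 'k ncpoly" where
  "rel_S2 q = ncp_sub
     (ncp_add
       (ncp_sub (ncp_mult (ncp_mult (ncp_mult gen2 gen2) gen2) gen1)
                (ncp_smult (q^2 + 1 + inverse q ^ 2)
                   (ncp_mult (ncp_mult (ncp_mult gen2 gen2) gen1) gen2)))
       (ncp_smult (q^2 + 1 + inverse q ^ 2)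
          (ncp_mult (ncp_mult (ncp_mult gen2 gen1) gen2) gen2)))
     (ncp_mult (ncp_mult (ncp_mult gen1 gen2) gen2) gen2)"

definition el_e3 :: "'k::field \<Rightarrow> 'k ncpoly" where
  "el_e3 q = ncp_sub (ncp_mult gen1 gen2) (ncp_smult (q^2) (ncp_mult gen2 gen1))"

definition el_z :: "'k::field \<Rightarrow> 'k ncpoly" where
  "el_z q = ncp_sub (ncp_mult gen2 (el_e3 q)) (ncp_smult (q^2) (ncp_mult (el_e3 q) gen2))"

definition el_w :: "'k::field \<Rightarrow> 'k ncpoly" where
  "el_w q = ncp_sub (ncp_mult gen2 (el_e3 q)) (ncp_mult (el_e3 q) gen2)"

definition el_z' :: "'k::field \<Rightarrow> 'k ncpoly" where
  "el_z' q = ncp_sub (ncp_mult gen1 (el_w q)) (ncp_smult (inverse q ^ 4) (ncp_mult (el_w q) gen1))"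

definition serre_ideal :: "'k::field \<Rightarrow> 'k ncpoly set" where
  "serre_ideal q = genideal free_alg {rel_S1 q, rel_S2 q}"

definition Uplus :: "'k::field \<Rightarrow> 'k ncpoly set ring" where
  "Uplus q = free_alg Quot serre_ideal q"

definition cls :: "'k::field \<Rightarrow> 'k ncpoly \<Rightarrow> 'k ncpoly set" where
  "cls q f = serre_ideal q +>\<^bsub>free_alg\<^esub> f"

definition alg_aut :: "'k::field \<Rightarrow> ('k ncpoly set \<Rightarrow> 'k ncpoly set) \<Rightarrow> bool" where
  "alg_aut q \<theta> \<longleftrightarrow> \<theta> \<in> ring_iso (Uplus q) (Uplus q) \<and>
     (\<forall>c. \<theta> (cls q (ncp_const c)) = cls q (ncp_const c))"

definition alg_closed_field :: "'k::field itself \<Rightarrow> bool" where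
  "alg_closed_field _ \<longleftrightarrow> (\<forall>p :: 'k poly. degree p > 0 \<longrightarrow> (\<exists>x. poly p x = 0))"

end

theory Submission
  imports Defs
begin


lemma ncp_mult_Nil: "ncp_mult f g [] = f [] * g []"
  by (simp add: ncp_mult_def)

lemma ncp_mult_Cons: "ncp_mult f g (x#w) = f [] * g (x#w) + ncp_mult (\<lambda>u. f (x#u)) g w"
  unfolding ncp_mult_def length_Cons sum.atMost_Suc_shift by simp

lemma ncp_mult_ldistr_gen:
  "ncp_mult (\<lambda>u. c * a u + b u) h w = c * ncp_mult a h w + ncp_mult b h w"
  by (simp add: ncp_mult_def sum.distrib sum_distrib_left algebra_simps)

lemma ncp_mult_assoc: "ncp_mult (ncp_mult f g) h w = ncp_mult f (ncp_mult g h) w"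
proof (induction w arbitrary: f)
  case Nil
  then show ?case by (simp add: ncp_mult_Nil mult_ac)
next
  case (Cons x w)
  show ?case
    by (simp add: ncp_mult_Cons ncp_mult_Nil ncp_mult_ldistr_gen Cons.IH algebra_simps)
qed


lemma ncp_mult_one_left: "ncp_mult (ncp_mon []) f w = f w"
  by (cases w) (simp_all add: ncp_mult_Cons ncp_mult_Nil ncp_mon_def, simp add: ncp_mult_def)

lemma ncp_mult_one_right: "ncp_mult f (ncp_mon []) w = f w"
proof (induction w arbitrary: f)
  case Nil then show ?case by (simp add: ncp_mult_Nil ncp_mon_def)
next
  case (Cons x w) then show ?case by (simp add: ncp_mult_Cons ncp_mon_def)
qed

lemma ncp_mult_ldistr: "ncp_mult (ncp_add f g) h = ncp_add (ncp_mult f h) (ncp_mult g h)"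
  by (rule ext) (simp add: ncp_mult_def ncp_add_def sum.distrib algebra_simps)

lemma ncp_mult_rdistr: "ncp_mult h (ncp_add f g) = ncp_add (ncp_mult h f) (ncp_mult h g)"
  by (rule ext) (simp add: ncp_mult_def ncp_add_def sum.distrib algebra_simps)

lemma supp_mult_subset:
  "{w. ncp_mult f g w \<noteq> 0} \<subseteq> (\<lambda>(u,v). u @ v) ` ({w. f w \<noteq> 0} \<times> {w. g w \<noteq> 0})"
proof
  fix w assume "w \<in> {w. ncp_mult f g w \<noteq> 0}"
  then have "(\<Sum>i\<le>length w. f (take i w) * g (drop i w)) \<noteq> 0" by (simp add: ncp_mult_def)
  then obtain i where "f (take i w) * g (drop i w) \<noteq> 0"
    using sum.not_neutral_contains_not_neutral by blast
  then show "w \<in> (\<lambda>(u,v). u @ v) ` ({w. f w \<noteq> 0} \<times> {w. g w \<noteq> 0})"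
    by (intro image_eqI[where x="(take i w, drop i w)"]) auto
qed

lemma ncp_carrier_mult: "f \<in> ncp_carrier \<Longrightarrow> g \<in> ncp_carrier \<Longrightarrow> ncp_mult f g \<in> ncp_carrier"
proof -
  assume f: "f \<in> ncp_carrier" and g: "g \<in> ncp_carrier"
  have "finite ((\<lambda>(u,v). u @ v) ` ({w. f w \<noteq> 0} \<times> {w. g w \<noteq> 0}))"
    using f g by (simp add: ncp_carrier_def)
  then show ?thesis unfolding ncp_carrier_def mem_Collect_eq
    by (rule finite_subset[OF supp_mult_subset])
qed

lemma ncp_carrier_add: "(f::'k::field ncpoly) \<in> ncp_carrier \<Longrightarrow> g \<in> ncp_carrier \<Longrightarrow> ncp_add f g \<in> ncp_carrier"
  unfolding ncp_carrier_def ncp_add_def mem_Collect_eq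
  by (rule finite_subset[of _ "{w. f w \<noteq> 0} \<union> {w. g w \<noteq> 0}"]) auto

lemma ncp_carrier_sub: "(f::'k::field ncpoly) \<in> ncp_carrier \<Longrightarrow> g \<in> ncp_carrier \<Longrightarrow> ncp_sub f g \<in> ncp_carrier"
  unfolding ncp_carrier_def ncp_sub_def mem_Collect_eq
  by (rule finite_subset[of _ "{w. f w \<noteq> 0} \<union> {w. g w \<noteq> 0}"]) auto

lemma ncp_carrier_smult: "(f::'k::field ncpoly) \<in> ncp_carrier \<Longrightarrow> ncp_smult c f \<in> ncp_carrier"
  unfolding ncp_carrier_def ncp_smult_def mem_Collect_eq
  by (rule finite_subset[of _ "{w. f w \<noteq> 0}"]) auto

lemma ncp_carrier_mon: "ncp_mon u \<in> ncp_carrier"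
  unfolding ncp_carrier_def ncp_mon_def mem_Collect_eq
  by (rule finite_subset[of _ "{u}"]) auto

lemma ncp_carrier_const: "ncp_const c \<in> ncp_carrier"
  unfolding ncp_carrier_def ncp_const_def mem_Collect_eq
  by (rule finite_subset[of _ "{[]}"]) auto

lemma ncp_carrier_neg: "(f::'k::field ncpoly) \<in> ncp_carrier \<Longrightarrow> (\<lambda>w. - f w) \<in> ncp_carrier"
  unfolding ncp_carrier_def by simp

lemma free_alg_simps [simp]:
  "carrier free_alg = ncp_carrier" "monoid.mult free_alg = ncp_mult" "one free_alg = ncp_mon []"
  "zero free_alg = (\<lambda>_. 0)" "ring.add free_alg = ncp_add"
  by (simp_all add: free_alg_def)

lemma free_alg_ring: "ring (free_alg :: 'k::field ncpoly ring)"
proof (rule ringI)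
  show "abelian_group (free_alg :: 'k::field ncpoly ring)"
  proof (rule abelian_groupI, goal_cases)
    case 1 then show ?case by (simp add: ncp_carrier_add)
  next
    case 2 then show ?case by (simp add: ncp_carrier_def)
  next
    case 3 then show ?case by (simp add: ncp_add_def add.assoc)
  next
    case 4 then show ?case by (simp add: ncp_add_def add.commute)
  next
    case 5 then show ?case by (simp add: ncp_add_def)
  next
    case (6 x) then show ?case
      by (intro bexI[of _ "\<lambda>w. - x w"]) (simp_all add: ncp_add_def ncp_carrier_neg)
  qed
  show "monoid (free_alg :: 'k::field ncpoly ring)"
    by (rule monoidI) (auto simp: ncp_carrier_mult ncp_carrier_mon ncp_mult_assoc ncp_mult_one_left
        ncp_mult_one_right)
qed (simp_all add: ncp_mult_ldistr ncp_mult_rdistr)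

lemma free_alg_a_inv: "f \<in> ncp_carrier \<Longrightarrow> a_inv free_alg f = (\<lambda>w. - (f w :: 'k::field))"
proof -
  assume f: "f \<in> ncp_carrier"
  interpret ring "free_alg :: 'k ncpoly ring" by (rule free_alg_ring)
  show ?thesis
    by (rule minus_equality) (simp_all add: f ncp_carrier_neg ncp_add_def)
qed

lemma free_alg_minus: "f \<in> ncp_carrier \<Longrightarrow> g \<in> ncp_carrier \<Longrightarrow>
   ncp_sub f g = a_minus free_alg f (g :: 'k::field ncpoly)"
  by (simp add: a_minus_def free_alg_a_inv ncp_sub_def ncp_add_def)

lemma free_alg_smult: "ncp_smult c f = ncp_mult (ncp_const c) f"
proof (rule ext)
  fix w show "ncp_smult c f w = ncp_mult (ncp_const c) f w"
    by (cases w) (simp_all add: ncp_smult_def ncp_mult_Cons ncp_mult_Nil ncp_const_def, simp add: ncp_mult_def)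
qed



definition dual_ring :: "('k::field \<times> 'k) ring" where
  "dual_ring = \<lparr>carrier = UNIV, monoid.mult = (\<lambda>x y. (fst x * fst y, fst x * snd y + snd x * fst y)),
     one = (1, 0), ring.zero = (0, 0), ring.add = (\<lambda>x y. (fst x + fst y, snd x + snd y))\<rparr>"

lemma dual_simps [simp]:
  "carrier dual_ring = UNIV"
  "monoid.mult dual_ring = (\<lambda>x y. (fst x * fst y, fst x * snd y + snd x * fst y))"
  "one dual_ring = (1, 0)" "zero dual_ring = (0, 0)"
  "ring.add dual_ring = (\<lambda>x y. (fst x + fst y, snd x + snd y))"
  by (simp_all add: dual_ring_def)

lemma dual_cring: "cring (dual_ring :: ('k::field \<times> 'k) ring)"
proof (rule cringI)
  show "abelian_group (dual_ring :: ('k::field \<times> 'k) ring)"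
  proof (rule abelian_groupI, goal_cases)
    case (6 x) then show ?case
      by (intro bexI[of _ "(- fst x, - snd x)"]) simp_all
  qed (simp_all add: algebra_simps)
  show "comm_monoid (dual_ring :: ('k::field \<times> 'k) ring)"
    by (rule comm_monoidI) (simp_all add: algebra_simps)
qed (simp add: algebra_simps)

definition lin :: "(bool list \<Rightarrow> 'k) \<Rightarrow> 'k ncpoly \<Rightarrow> 'k::field" where
  "lin \<gamma> f = (\<Sum>w\<in>{w. f w \<noteq> 0}. f w * \<gamma> w)"

lemma lin_eq: "finite A \<Longrightarrow> {w. f w \<noteq> 0} \<subseteq> A \<Longrightarrow> lin \<gamma> f = (\<Sum>w\<in>A. f w * \<gamma> w)"
  unfolding lin_def by (rule sum.mono_neutral_left) (auto intro: finite_subset)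

lemma lin_add:
  assumes "f \<in> ncp_carrier" "g \<in> ncp_carrier"
  shows "lin \<gamma> (ncp_add f g) = lin \<gamma> f + lin \<gamma> g"
proof -
  let ?A = "{w. f w \<noteq> 0} \<union> {w. g w \<noteq> 0}"
  have fA: "finite ?A" using assms by (simp add: ncp_carrier_def)
  show ?thesis
    by (subst (1 2 3) lin_eq[OF fA]) (auto simp: ncp_add_def sum.distrib algebra_simps)
qed

lemma lin_sub:
  assumes "f \<in> ncp_carrier" "g \<in> ncp_carrier"
  shows "lin \<gamma> (ncp_sub f g) = lin \<gamma> f - lin \<gamma> g"
proof -
  let ?A = "{w. f w \<noteq> 0} \<union> {w. g w \<noteq> 0}"
  have fA: "finite ?A" using assms by (simp add: ncp_carrier_def)
  show ?thesis
    by (subst (1 2 3) lin_eq[OF fA]) (auto simp: ncp_sub_def sum_subtractf algebra_simps)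
qed

lemma lin_smult:
  assumes "f \<in> ncp_carrier"
  shows "lin \<gamma> (ncp_smult c f) = c * lin \<gamma> f"
proof -
  let ?A = "{w. f w \<noteq> 0}"
  have fA: "finite ?A" using assms by (simp add: ncp_carrier_def)
  show ?thesis
    by (subst (1 2) lin_eq[OF fA]) (auto simp: ncp_smult_def sum_distrib_left algebra_simps)
qed

lemma lin_mon: "lin \<gamma> (ncp_mon u) = \<gamma> u"
  by (subst lin_eq[of "{u}"]) (auto simp: ncp_mon_def)

lemma lin_const: "lin \<gamma> (ncp_const c) = c * \<gamma> []"
  by (subst lin_eq[of "{[]}"]) (auto simp: ncp_const_def)

lemma lin_mult:
  assumes f: "f \<in> ncp_carrier" and g: "g \<in> ncp_carrier"
  shows "lin \<gamma> (ncp_mult f g) =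
    (\<Sum>u\<in>{w. f w \<noteq> 0}. \<Sum>v\<in>{w. g w \<noteq> 0}. f u * g v * \<gamma> (u @ v))"
proof -
  define Sf where "Sf = {w. f w \<noteq> 0}"
  define Sg where "Sg = {w. g w \<noteq> 0}"
  have fSf: "finite Sf" and fSg: "finite Sg" using f g by (simp_all add: Sf_def Sg_def ncp_carrier_def)
  define A where "A = (\<lambda>(u,v). u @ v) ` (Sf \<times> Sg)"
  have fA: "finite A" using fSf fSg by (simp add: A_def)
  define F where "F = (\<lambda>(w, i). f (take i w) * g (drop i w) * \<gamma> w)"
  define S where "S = Sigma A (\<lambda>w. {..length w})"
  have fS: "finite S" using fA by (simp add: S_def)
  define j where "j = (\<lambda>(u::bool list, v::bool list). (u @ v, length u))"
  have "lin \<gamma> (ncp_mult f g) = (\<Sum>w\<in>A. ncp_mult f g w * \<gamma> w)"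
    by (rule lin_eq[OF fA]) (use supp_mult_subset in \<open>auto simp: A_def Sf_def Sg_def\<close>)
  also have "\<dots> = (\<Sum>w\<in>A. \<Sum>i\<le>length w. F (w, i))"
    by (simp add: ncp_mult_def F_def sum_distrib_right)
  also have "\<dots> = (\<Sum>p\<in>S. F p)"
    by (simp add: S_def sum.Sigma[OF fA] )
  also have "\<dots> = (\<Sum>p\<in>j ` (Sf \<times> Sg). F p)"
  proof (rule sum.mono_neutral_right[OF fS])
    show "j ` (Sf \<times> Sg) \<subseteq> S" by (auto simp: j_def S_def A_def)
    show "\<forall>p\<in>S - j ` (Sf \<times> Sg). F p = 0"
    proof
      fix p assume p: "p \<in> S - j ` (Sf \<times> Sg)"
      obtain w i where pw: "p = (w, i)" by (cases p)
      have il: "i \<le> length w" using p pw by (auto simp: S_def)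
      show "F p = 0"
      proof (rule ccontr)
        assume "F p \<noteq> 0"
        then have "take i w \<in> Sf" "drop i w \<in> Sg" by (auto simp: F_def pw Sf_def Sg_def)
        then have "j (take i w, drop i w) \<in> j ` (Sf \<times> Sg)" by blast
        moreover have "j (take i w, drop i w) = p" using il by (simp add: j_def pw min_def)
        ultimately show False using p by simp
      qed
    qed
  qed
  also have "\<dots> = (\<Sum>x\<in>Sf \<times> Sg. F (j x))"
  proof -
    have inj: "inj_on j (Sf \<times> Sg)" by (auto simp: inj_on_def j_def)
    show ?thesis by (simp add: sum.reindex[OF inj])
  qed
  also have "\<dots> = (\<Sum>u\<in>Sf. \<Sum>v\<in>Sg. f u * g v * \<gamma> (u @ v))"
    by (simp add: sum.cartesian_product j_def F_def split_def)
  finally show ?thesis by (simp add: Sf_def Sg_def)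
qed

definition nF :: "bool list \<Rightarrow> nat" where "nF w = length (filter Not w)"
definition al :: "bool list \<Rightarrow> 'k::field" where "al w = (if nF w = 0 then 1 else 0)"
definition be :: "bool list \<Rightarrow> 'k::field" where "be w = (if nF w = 1 then 1 else 0)"

lemma nF_app: "nF (u @ v) = nF u + nF v"
  by (simp add: nF_def)
lemma al_app: "al (u @ v) = al u * al v"
  by (simp add: al_def nF_app)
lemma be_app: "be (u @ v) = al u * be v + be u * al v"
  by (auto simp add: al_def be_def nF_app)

lemma lin_sum_def: "lin \<gamma> f = (\<Sum>w\<in>{w. f w \<noteq> 0}. f w * \<gamma> w)" by (rule lin_def)

lemma lin_al_mult: assumes "f \<in> ncp_carrier" "g \<in> ncp_carrier" shows
    "lin al (ncp_mult f g) = lin al f * lin al (g :: 'k::field ncpoly)"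
  unfolding lin_mult[OF assms] by (simp add: lin_mult al_app lin_def sum_product mult_ac)

lemma lin_be_mult: assumes "f \<in> ncp_carrier" "g \<in> ncp_carrier" shows
    "lin be (ncp_mult f g) = lin al f * lin be g + lin be f * lin al (g :: 'k::field ncpoly)"
  unfolding lin_mult[OF assms] by (simp add: lin_mult be_app lin_def sum_product algebra_simps sum.distrib)
    (subst sum.swap, simp add: mult_ac)

definition phi :: "'k::field ncpoly \<Rightarrow> 'k \<times> 'k" where "phi f = (lin al f, lin be f)"

lemma phi_hom: "phi \<in> ring_hom (free_alg :: 'k::field ncpoly ring) dual_ring"
  by (rule ring_hom_memI) (simp_all add: phi_def lin_al_mult lin_be_mult lin_add lin_mon
      al_def be_def nF_def algebra_simps)



lemma carrier_facts [simp]: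
  "gen1 \<in> ncp_carrier" "gen2 \<in> ncp_carrier" "ncp_const c \<in> ncp_carrier"
  "el_e3 q \<in> ncp_carrier" "el_w q \<in> ncp_carrier" "el_z q \<in> ncp_carrier" "el_z' q \<in> ncp_carrier"
  "rel_S1 q \<in> ncp_carrier" "rel_S2 q \<in> ncp_carrier"
  by (simp_all add: gen1_def gen2_def ncp_carrier_mon ncp_carrier_const el_e3_def el_w_def el_z_def
      el_z'_def rel_S1_def rel_S2_def ncp_carrier_mult ncp_carrier_add ncp_carrier_sub ncp_carrier_smult)

lemma carrier_facts' [simp]:
  "gen1 \<in> carrier free_alg" "gen2 \<in> carrier free_alg" "ncp_const c \<in> carrier free_alg"
  "el_e3 q \<in> carrier free_alg" "el_w q \<in> carrier free_alg" "el_z q \<in> carrier free_alg"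
  "el_z' q \<in> carrier free_alg"
  "rel_S1 q \<in> carrier free_alg" "rel_S2 q \<in> carrier free_alg"
  by simp_all

lemma kill_z':
  fixes q :: "'k::field"
  assumes h: "h \<in> ring_hom (free_alg :: 'k ncpoly ring) D" and D: "cring D"
  shows "h (el_z' q) = \<zero>\<^bsub>D\<^esub>"
proof -
  interpret R: ring "free_alg :: 'k ncpoly ring" by (rule free_alg_ring)
  interpret D: cring D by (rule D)
  interpret H: ring_hom_ring "free_alg :: 'k ncpoly ring" D h
    by (rule ring_hom_ringI2[OF free_alg_ring D.ring_axioms h])
  have w: "el_w q = (gen2 \<otimes>\<^bsub>free_alg\<^esub> el_e3 q) \<ominus>\<^bsub>free_alg\<^esub> (el_e3 q \<otimes>\<^bsub>free_alg\<^esub> gen2)"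
    by (simp add: el_w_def free_alg_minus ncp_carrier_mult)
  have hw: "h (el_w q) = \<zero>\<^bsub>D\<^esub>"
  proof -
    have c: "h gen2 \<in> carrier D" "h (el_e3 q) \<in> carrier D" by (simp_all add: H.hom_closed)
    have "h (el_w q) = h gen2 \<otimes>\<^bsub>D\<^esub> h (el_e3 q) \<ominus>\<^bsub>D\<^esub> h (el_e3 q) \<otimes>\<^bsub>D\<^esub> h gen2"
      unfolding w a_minus_def
      by (simp del: free_alg_simps add: H.hom_add H.hom_a_inv)
    also have "\<dots> = \<zero>\<^bsub>D\<^esub>" using c by (simp add: D.m_comm[of "h gen2"] D.r_neg a_minus_def)
    finally show ?thesis .
  qed
  have z': "el_z' q = (gen1 \<otimes>\<^bsub>free_alg\<^esub> el_w q) \<ominus>\<^bsub>free_alg\<^esub>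
       (ncp_const (inverse q ^ 4) \<otimes>\<^bsub>free_alg\<^esub> (el_w q \<otimes>\<^bsub>free_alg\<^esub> gen1))"
    by (simp add: el_z'_def free_alg_minus free_alg_smult ncp_carrier_mult)
  have c: "h gen1 \<in> carrier D" "h (ncp_const (inverse q ^ 4)) \<in> carrier D" by (simp_all add: H.hom_closed)
  have "h (el_z' q) = (h gen1 \<otimes>\<^bsub>D\<^esub> h (el_w q)) \<ominus>\<^bsub>D\<^esub>
      (h (ncp_const (inverse q ^ 4)) \<otimes>\<^bsub>D\<^esub> (h (el_w q) \<otimes>\<^bsub>D\<^esub> h gen1))"
    unfolding z' a_minus_def by (simp del: free_alg_simps add: H.hom_add H.hom_a_inv)
  also have "\<dots> = \<zero>\<^bsub>D\<^esub>" unfolding hw using c by (simp add: a_minus_def)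
  finally show ?thesis .
qed


lemma dual_ring_is_ring: "ring (dual_ring :: ('k::field \<times> 'k) ring)"
  using dual_cring cring.axioms(1) by blast

lemma gen_lin [simp]:
  "lin al (gen1 :: 'k::field ncpoly) = 0" "lin be (gen1 :: 'k::field ncpoly) = 1"
  "lin al (gen2 :: 'k::field ncpoly) = 1" "lin be (gen2 :: 'k::field ncpoly) = 0"
  by (simp_all add: gen1_def gen2_def lin_mon al_def be_def nF_def)

lemmas lin_rules = lin_add lin_sub lin_smult lin_al_mult lin_be_mult ncp_carrier_mult ncp_carrier_add
  ncp_carrier_sub ncp_carrier_smult

lemma phi_S1: "phi (rel_S1 (q::'k::field)) = (0, 0)"
  by (simp add: phi_def rel_S1_def lin_rules)

lemma phi_S2: "phi (rel_S2 (q::'k::field)) = (0, 0)"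
  by (simp add: phi_def rel_S2_def lin_rules)

lemma phi_z: "phi (el_z (q::'k::field)) = (0, (1 - q^2)^2)"
  by (simp add: phi_def el_z_def el_e3_def lin_rules power2_eq_square algebra_simps)

lemma serre_ideal_ideal: "ideal (serre_ideal (q::'k::field)) free_alg"
  unfolding serre_ideal_def
  by (rule ring.genideal_ideal[OF free_alg_ring]) simp

lemma phi_hom_ring: "ring_hom_ring (free_alg :: 'k::field ncpoly ring) dual_ring phi"
  by (rule ring_hom_ringI2[OF free_alg_ring dual_ring_is_ring phi_hom])

lemma phi_kills_serre: "x \<in> serre_ideal (q::'k::field) \<Longrightarrow> phi x = (0, 0)"
proof -
  assume x: "x \<in> serre_ideal q"
  have k1: "rel_S1 q \<in> a_kernel free_alg dual_ring phi"
    unfolding a_kernel_def' by (rule CollectI, rule conjI, rule carrier_facts'(8)) (simp only: phi_S1 dual_simps)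
  have k2: "rel_S2 q \<in> a_kernel free_alg dual_ring phi"
    unfolding a_kernel_def' by (rule CollectI, rule conjI, rule carrier_facts'(9)) (simp only: phi_S2 dual_simps)
  have sub: "{rel_S1 q, rel_S2 q} \<subseteq> a_kernel free_alg dual_ring phi"
    by (simp only: insert_subset empty_subsetI k1 k2 simp_thms)
  have "serre_ideal q \<subseteq> a_kernel free_alg dual_ring phi"
    unfolding serre_ideal_def
    using ring.genideal_minimal[OF free_alg_ring ring_hom_ring.kernel_is_ideal[OF phi_hom_ring] sub] .
  then have "x \<in> a_kernel free_alg dual_ring phi" using x by (rule subsetD)
  then have "phi x = \<zero>\<^bsub>dual_ring\<^esub>" by (simp add: a_kernel_def')
  then show ?thesis by (simp only: dual_simps)
qed

lemma phi_coset:
  assumes a: "a \<in> carrier free_alg"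
  shows "phi ` (serre_ideal (q::'k::field) +>\<^bsub>free_alg\<^esub> a) = {phi a}"
proof -
  have "phi (h \<oplus>\<^bsub>free_alg\<^esub> a) = phi a" if "h \<in> serre_ideal q" for h
  proof -
    have hc: "h \<in> carrier free_alg" by (rule additive_subgroup.a_Hcarr[OF ideal.axioms(1)[OF serre_ideal_ideal] that])
    have "phi (h \<oplus>\<^bsub>free_alg\<^esub> a) = phi h \<oplus>\<^bsub>dual_ring\<^esub> phi a"
      by (rule ring_hom_add[OF phi_hom hc a])
    also have "\<dots> = phi a" by (simp add: phi_kills_serre[OF that])
    finally show ?thesis .
  qed
  moreover have "\<zero>\<^bsub>free_alg\<^esub> \<in> serre_ideal q" by (rule additive_subgroup.zero_closed[OF ideal.axioms(1)[OF serre_ideal_ideal]])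
  ultimately have eq: "\<And>h. h \<in> serre_ideal q \<Longrightarrow> phi (h \<oplus>\<^bsub>free_alg\<^esub> a) = phi a"
    and z0: "\<zero>\<^bsub>free_alg\<^esub> \<in> serre_ideal q" by blast+
  have "phi ` (\<Union>h\<in>serre_ideal q. {h \<oplus>\<^bsub>free_alg\<^esub> a}) = (\<Union>h\<in>serre_ideal q. {phi (h \<oplus>\<^bsub>free_alg\<^esub> a)})"
    by (simp only: image_UN image_insert image_empty)
  also have "\<dots> = (\<Union>h\<in>serre_ideal q. {phi a})"
    by (rule SUP_cong[OF refl]) (simp only: eq)
  also have "\<dots> = {phi a}"
  proof -
    have ne: "serre_ideal q \<noteq> {}" using z0 by blast
    show ?thesis by (simp only: UN_constant ne if_False)
  qed
  finally show ?thesis by (simp only: a_r_coset_def')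
qed

definition psi0 :: "'k::field ncpoly set \<Rightarrow> 'k \<times> 'k" where
  "psi0 X = the_elem (phi ` X)"

lemma psi0_coset: "a \<in> carrier free_alg \<Longrightarrow> psi0 (serre_ideal (q::'k::field) +>\<^bsub>free_alg\<^esub> a) = phi a"
  by (simp only: psi0_def phi_coset the_elem_eq)

lemma Uplus_carrier: "X \<in> carrier (Uplus (q::'k::field)) \<Longrightarrow> \<exists>a\<in>carrier free_alg. X = serre_ideal q +>\<^bsub>free_alg\<^esub> a"
  unfolding Uplus_def FactRing_def A_RCOSETS_def' by simp

lemma psi0_hom: "psi0 \<in> ring_hom (Uplus (q::'k::field)) dual_ring"
proof (rule ring_hom_memI)
  show "psi0 x \<in> carrier dual_ring" for x by simp
  show "psi0 (x \<otimes>\<^bsub>Uplus q\<^esub> y) = psi0 x \<otimes>\<^bsub>dual_ring\<^esub> psi0 y"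
    if xy: "x \<in> carrier (Uplus q)" "y \<in> carrier (Uplus q)" for x y
  proof -
    obtain a where a: "a \<in> carrier free_alg" "x = serre_ideal q +>\<^bsub>free_alg\<^esub> a"
      using Uplus_carrier[OF xy(1)] by blast
    obtain b where b: "b \<in> carrier free_alg" "y = serre_ideal q +>\<^bsub>free_alg\<^esub> b"
      using Uplus_carrier[OF xy(2)] by blast
    have "x \<otimes>\<^bsub>Uplus q\<^esub> y = serre_ideal q +>\<^bsub>free_alg\<^esub> (a \<otimes>\<^bsub>free_alg\<^esub> b)"
      unfolding Uplus_def FactRing_def using a b by (simp del: free_alg_simps add: ideal.rcoset_mult_add[OF serre_ideal_ideal])
    moreover have ab: "a \<otimes>\<^bsub>free_alg\<^esub> b \<in> carrier free_alg" using a b by (simp add: ncp_carrier_mult)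
    ultimately show ?thesis using a b
      by (simp del: free_alg_simps add: psi0_coset psi0_coset[OF ab] ring_hom_mult[OF phi_hom])
  qed
  show "psi0 (x \<oplus>\<^bsub>Uplus q\<^esub> y) = psi0 x \<oplus>\<^bsub>dual_ring\<^esub> psi0 y"
    if xy: "x \<in> carrier (Uplus q)" "y \<in> carrier (Uplus q)" for x y
  proof -
    obtain a where a: "a \<in> carrier free_alg" "x = serre_ideal q +>\<^bsub>free_alg\<^esub> a"
      using Uplus_carrier[OF xy(1)] by blast
    obtain b where b: "b \<in> carrier free_alg" "y = serre_ideal q +>\<^bsub>free_alg\<^esub> b"
      using Uplus_carrier[OF xy(2)] by blast
    have "x \<oplus>\<^bsub>Uplus q\<^esub> y = serre_ideal q +>\<^bsub>free_alg\<^esub> (a \<oplus>\<^bsub>free_alg\<^esub> b)"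
      unfolding Uplus_def FactRing_def using a b by (simp del: free_alg_simps add: ideal.a_rcos_sum[OF serre_ideal_ideal])
    moreover have ab: "a \<oplus>\<^bsub>free_alg\<^esub> b \<in> carrier free_alg" using a b by (simp add: ncp_carrier_add)
    ultimately show ?thesis using a b
      by (simp del: free_alg_simps add: psi0_coset psi0_coset[OF ab] ring_hom_add[OF phi_hom])
  qed
  show "psi0 \<one>\<^bsub>Uplus q\<^esub> = \<one>\<^bsub>dual_ring\<^esub>"
  proof -
    have o: "\<one>\<^bsub>free_alg\<^esub> \<in> carrier free_alg" by (simp add: ncp_carrier_mon)
    show ?thesis unfolding Uplus_def FactRing_def
      by (simp del: free_alg_simps add: psi0_coset[OF o] ring_hom_one[OF phi_hom])
  qed
qed



theorem proposition3p3:
  fixes q :: "'k::field_char_0"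
  assumes "alg_closed_field TYPE('k)"
    and "q \<noteq> 0"
    and "\<forall>n::nat. n > 0 \<longrightarrow> q ^ n \<noteq> 1"
  shows "\<not> (\<exists>\<theta>. alg_aut q \<theta> \<and>
              \<theta> ` genideal (Uplus q) {cls q (el_z q)} = genideal (Uplus q) {cls q (el_z' q)})
       \<and> \<not> (\<exists>\<theta>. alg_aut q \<theta> \<and>
              \<theta> ` genideal (Uplus q) {cls q (el_z' q)} = genideal (Uplus q) {cls q (el_z q)})"
proof -
  have q2: "q ^ 2 \<noteq> 1" using assms(3) by auto
  have nz: "(1 - q^2)^2 \<noteq> 0" using q2 by simp
  have U: "ring (Uplus q)" unfolding Uplus_def by (rule ideal.quotient_is_ring[OF serre_ideal_ideal])
  have cls_eq: "cls q = (\<lambda>f. serre_ideal q +>\<^bsub>free_alg\<^esub> f)" by (rule ext) (simp add: cls_def)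
  have cls_hom: "cls q \<in> ring_hom free_alg (Uplus q)"
    unfolding cls_eq Uplus_def by (rule ideal.rcos_ring_hom[OF serre_ideal_ideal])
  have clsz_c: "cls q (el_z q) \<in> carrier (Uplus q)"
    using ring_hom_closed[OF cls_hom] by simp
  have clsz'_c: "cls q (el_z' q) \<in> carrier (Uplus q)"
    using ring_hom_closed[OF cls_hom] by simp
  have kill: "\<psi> x = (0, 0)" if psi: "\<psi> \<in> ring_hom (Uplus q) dual_ring"
    and x: "x \<in> genideal (Uplus q) {cls q (el_z' q)}" for \<psi> x
  proof -
    have hr: "ring_hom_ring (Uplus q) dual_ring \<psi>"
      by (rule ring_hom_ringI2[OF U dual_ring_is_ring psi])
    have "\<psi> (cls q (el_z' q)) = \<zero>\<^bsub>dual_ring\<^esub>"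
      using kill_z'[OF ring_hom_trans[OF cls_hom psi] dual_cring] by simp
    then have k: "{cls q (el_z' q)} \<subseteq> a_kernel (Uplus q) dual_ring \<psi>"
      using clsz'_c by (simp add: a_kernel_def')
    have "genideal (Uplus q) {cls q (el_z' q)} \<subseteq> a_kernel (Uplus q) dual_ring \<psi>"
      by (rule ring.genideal_minimal[OF U ring_hom_ring.kernel_is_ideal[OF hr] k])
    then have "x \<in> a_kernel (Uplus q) dual_ring \<psi>" using x by (rule subsetD)
    then show ?thesis by (simp add: a_kernel_def')
  qed
  have psi0z: "psi0 (cls q (el_z q)) \<noteq> (0, 0)"
    using nz by (simp add: cls_def psi0_coset phi_z)
  have zin: "cls q (el_z q) \<in> genideal (Uplus q) {cls q (el_z q)}"
    by (rule ring.genideal_self'[OF U clsz_c])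
  have part1: False if th: "alg_aut q \<theta>"
    and eq: "\<theta> ` genideal (Uplus q) {cls q (el_z q)} = genideal (Uplus q) {cls q (el_z' q)}" for \<theta>
  proof -
    have iso: "\<theta> \<in> ring_iso (Uplus q) (Uplus q)" using th by (simp add: alg_aut_def)
    have inv: "inv_into (carrier (Uplus q)) \<theta> \<in> ring_hom (Uplus q) (Uplus q)"
      using ring_iso_set_sym[OF U iso] by (simp add: ring_iso_def)
    have inj: "inj_on \<theta> (carrier (Uplus q))"
      using iso by (simp add: ring_iso_def bij_betw_def)
    let ?psi = "psi0 \<circ> inv_into (carrier (Uplus q)) \<theta>"
    have psi: "?psi \<in> ring_hom (Uplus q) dual_ring" by (rule ring_hom_trans[OF inv psi0_hom])
    have "\<theta> (cls q (el_z q)) \<in> genideal (Uplus q) {cls q (el_z' q)}" using zin eq by blast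
    then have "?psi (\<theta> (cls q (el_z q))) = (0, 0)" by (rule kill[OF psi])
    moreover have "?psi (\<theta> (cls q (el_z q))) = psi0 (cls q (el_z q))"
      using inv_into_f_f[OF inj clsz_c] by simp
    ultimately show False using psi0z by simp
  qed
  have part2: False if th: "alg_aut q \<theta>"
    and eq: "\<theta> ` genideal (Uplus q) {cls q (el_z' q)} = genideal (Uplus q) {cls q (el_z q)}" for \<theta>
  proof -
    have iso: "\<theta> \<in> ring_iso (Uplus q) (Uplus q)" using th by (simp add: alg_aut_def)
    have hom: "\<theta> \<in> ring_hom (Uplus q) (Uplus q)" using iso by (simp add: ring_iso_def)
    have psi: "psi0 \<circ> \<theta> \<in> ring_hom (Uplus q) dual_ring" by (rule ring_hom_trans[OF hom psi0_hom])
    obtain y where y: "y \<in> genideal (Uplus q) {cls q (el_z' q)}" "\<theta> y = cls q (el_z q)"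
      using zin eq by (metis imageE)
    have "(psi0 \<circ> \<theta>) y = (0, 0)" by (rule kill[OF psi y(1)])
    then show False using psi0z y(2) by simp
  qed
  show ?thesis using part1 part2 by blast
qed


end
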